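(* Let $n\in\mathbb{N}$. Two points $A,B\in\mathbb{Q}\cup\{\infty\}$ are neighbours in both $\mathcal{F}$ and $\frac1n\mathcal{F}$ if and only if they can be written in reduced form as $A=\frac{a}{n_1c}$ and $B=\frac{b}{n_2d}$ with $n=n_1n_2$ and $|an_2d-bn_1c|=1$.
   Context: The Farey tessellation $\mathcal{F}$ is the ideal triangulation of the upper half-plane $\mathbb{H}$ whose vertex set is $\mathbb{Q}\cup\{\infty\}$ (with $\infty=\frac10$) and in which two vertices written in reduced form $\frac pq,\frac rs$ are joined by a geodesic edge (are \emph{neighbours} in $\mathcal{F}$) iff $|ps-qr|=1$. $\frac1n\mathcal{F}$ is the image of $\mathcal{F}$ under the isometry $z\mapsto z/n$; thus $A,B$ are neighbours in $\frac1n\mathcal{F}$ iff $nA,nB$ are neighbours in $\mathcal{F}$. *)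

theory Defs
  imports Complex_Main
begin

text \<open>Points of Q \<union> {\<infinity>} are modelled as rat option; None is \<infinity> = 1/0.\<close>
type_synonym qpoint = "rat option"

fun reduced_form :: "qpoint \<Rightarrow> int \<times> int" where
  "reduced_form None = (1, 0)"
| "reduced_form (Some x) = quotient_of x"

definition is_reduced_rep :: "qpoint \<Rightarrow> int \<Rightarrow> int \<Rightarrow> bool" where
  "is_reduced_rep A p q \<longleftrightarrow> coprime p q \<and>
     (case A of None \<Rightarrow> q = 0 | Some x \<Rightarrow> q \<noteq> 0 \<and> x = of_int p / of_int q)"

definition farey_nbr :: "qpoint \<Rightarrow> qpoint \<Rightarrow> bool" where
  "farey_nbr A B \<longleftrightarrow>
     (let (p, q) = reduced_form A; (r, s) = reduced_form B in \<bar>p * s - q * r\<bar> = 1)"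

fun scale_pt :: "nat \<Rightarrow> qpoint \<Rightarrow> qpoint" where
  "scale_pt n None = None"
| "scale_pt n (Some x) = Some (of_nat n * x)"

text \<open>Neighbours in (1/n)F: nA and nB are neighbours in F.\<close>
definition farey_nbr_scaled :: "nat \<Rightarrow> qpoint \<Rightarrow> qpoint \<Rightarrow> bool" where
  "farey_nbr_scaled n A B \<longleftrightarrow> farey_nbr (scale_pt n A) (scale_pt n B)"

end

theory Submission
  imports Defs
begin

lemma rep_rf: "is_reduced_rep A (fst (reduced_form A)) (snd (reduced_form A))"
proof (cases A)
  case None then show ?thesis by (simp add: is_reduced_rep_def)
next
  case (Some x)
  obtain p q where pq: "quotient_of x = (p, q)" by (cases "quotient_of x")
  have "x = of_int p / of_int q" using quotient_of_div[OF pq] .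
  moreover have "q > 0" using quotient_of_denom_pos[OF pq] .
  moreover have "coprime p q" using quotient_of_coprime[OF pq] .
  ultimately show ?thesis using Some pq by (simp add: is_reduced_rep_def)
qed

lemma unit_abs: "coprime (p::int) 0 \<Longrightarrow> \<bar>p\<bar> = 1"
  by simp

lemma rep_unique:
  assumes "is_reduced_rep A p q" "is_reduced_rep A p' q'"
  shows "(p' = p \<and> q' = q) \<or> (p' = -p \<and> q' = -q)"
proof (cases A)
  case None
  then have "q = 0" "q' = 0" "coprime p 0" "coprime p' 0" using assms by (auto simp: is_reduced_rep_def)
  then have "\<bar>p\<bar> = 1" "\<bar>p'\<bar> = 1" by auto
  then have "p' = p \<or> p' = -p" by arith
  then show ?thesis using \<open>q = 0\<close> \<open>q' = 0\<close> by auto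
next
  case (Some x)
  then have h: "coprime p q" "coprime p' q'" "q \<noteq> 0" "q' \<noteq> 0"
    "x = of_int p / of_int q" "x = of_int p' / of_int q'"
    using assms by (auto simp: is_reduced_rep_def)
  have "(of_int p :: rat) / of_int q = of_int p' / of_int q'" using h by simp
  then have "(of_int (p * q') :: rat) = of_int (p' * q)" using h(3,4) by (simp add: field_simps)
  then have e: "p * q' = p' * q" by (simp only: of_int_eq_iff)
  have "q dvd p * q'" using e by simp
  then have d1: "q dvd q'" using h(1) by (metis coprime_commute coprime_dvd_mult_right_iff)
  have "q' dvd p' * q" using e by (metis dvd_triv_right)
  then have d2: "q' dvd q" using h(2) by (metis coprime_commute coprime_dvd_mult_right_iff)
  have "\<bar>q\<bar> = \<bar>q'\<bar>" by (rule zdvd_antisym_abs[OF d1 d2])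
  then have "q' = q \<or> q' = -q" by arith
  then show ?thesis
  proof
    assume "q' = q" then have "p' = p" using e h(3) by simp
    then show ?thesis using \<open>q' = q\<close> by simp
  next
    assume "q' = -q"
    then have "(p' + p) * q = 0" using e by (simp add: algebra_simps)
    then have "p' = -p" using h(3) by simp
    then show ?thesis using \<open>q' = -q\<close> by simp
  qed
qed

lemma nbr_iff:
  assumes "is_reduced_rep A p q" "is_reduced_rep B r s"
  shows "farey_nbr A B \<longleftrightarrow> \<bar>p * s - q * r\<bar> = 1"
proof -
  obtain p0 q0 where a: "reduced_form A = (p0, q0)" by (cases "reduced_form A")
  obtain r0 s0 where b: "reduced_form B = (r0, s0)" by (cases "reduced_form B")
  have ra: "is_reduced_rep A p0 q0" using rep_rf[of A] a by simp
  have rb: "is_reduced_rep B r0 s0" using rep_rf[of B] b by simp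
  have "\<bar>p0 * s0 - q0 * r0\<bar> = \<bar>p * s - q * r\<bar>"
    using rep_unique[OF ra assms(1)] rep_unique[OF rb assms(2)]
    by (elim disjE conjE) simp_all
  then show ?thesis using a b by (simp add: farey_nbr_def)
qed

lemma rep_scale:
  assumes "is_reduced_rep A p q" "q = k * c" "int n = k * m" "coprime (m * p) c" "k \<noteq> 0"
  shows "is_reduced_rep (scale_pt n A) (m * p) c"
proof (cases A)
  case None
  then show ?thesis using assms by (auto simp: is_reduced_rep_def)
next
  case (Some x)
  then have h: "q \<noteq> 0" "x = of_int p / of_int q" using assms(1) by (auto simp: is_reduced_rep_def)
  then have c0: "c \<noteq> 0" using assms(2) by auto
  have "(of_nat n :: rat) = of_int k * of_int m" using assms(3)
    by (metis of_int_mult of_int_of_nat_eq)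
  then have "of_nat n * x = (of_int (m * p) :: rat) / of_int c"
    using h assms(2,5) c0 by (simp add: field_simps)
  then show ?thesis using Some c0 assms(4) by (simp add: is_reduced_rep_def)
qed

theorem lemma3p7:
  fixes n :: nat and A B :: qpoint
  assumes "n \<ge> 1"
  shows "(farey_nbr A B \<and> farey_nbr_scaled n A B) \<longleftrightarrow>
    (\<exists>(n1::nat) (n2::nat) (a::int) (b::int) (c::int) (d::int).
        n = n1 * n2 \<and>
        is_reduced_rep A a (int n1 * c) \<and>
        is_reduced_rep B b (int n2 * d) \<and>
        \<bar>a * int n2 * d - b * int n1 * c\<bar> = 1)"
proof
  assume H: "farey_nbr A B \<and> farey_nbr_scaled n A B"
  obtain p q where a: "reduced_form A = (p, q)" by (cases "reduced_form A")
  obtain r s where b: "reduced_form B = (r, s)" by (cases "reduced_form B")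
  have ra: "is_reduced_rep A p q" using rep_rf[of A] a by simp
  have rb: "is_reduced_rep B r s" using rep_rf[of B] b by simp
  have n0: "int n \<noteq> 0" using assms by simp
  define g1 where "g1 = gcd (int n) q"
  define g2 where "g2 = gcd (int n) s"
  define c where "c = q div g1"
  define d where "d = s div g2"
  define m1 where "m1 = int n div g1"
  define m2 where "m2 = int n div g2"
  have g1p: "g1 > 0" unfolding g1_def using n0 by simp
  have g2p: "g2 > 0" unfolding g2_def using n0 by simp
  have q1: "q = g1 * c" unfolding c_def g1_def by simp
  have s1: "s = g2 * d" unfolding d_def g2_def by simp
  have nn1: "int n = g1 * m1" unfolding m1_def g1_def by simp
  have nn2: "int n = g2 * m2" unfolding m2_def g2_def by simp
  have cm1: "coprime m1 c" unfolding m1_def c_def g1_def using n0 div_gcd_coprime by blast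
  have cm2: "coprime m2 d" unfolding m2_def d_def g2_def using n0 div_gcd_coprime by blast
  have cpq: "coprime p q" "coprime r s" using ra rb by (auto simp: is_reduced_rep_def)
  have "coprime p c" using cpq(1) q1 by (metis coprime_mult_right_iff)
  then have cc1: "coprime (m1 * p) c" using cm1 by simp
  have "coprime r d" using cpq(2) s1 by (metis coprime_mult_right_iff)
  then have cc2: "coprime (m2 * r) d" using cm2 by simp
  have sa: "is_reduced_rep (scale_pt n A) (m1 * p) c" using rep_scale[OF ra q1 nn1 cc1] g1p by simp
  have sb: "is_reduced_rep (scale_pt n B) (m2 * r) d" using rep_scale[OF rb s1 nn2 cc2] g2p by simp
  have e1: "\<bar>p * s - q * r\<bar> = 1" using H nbr_iff[OF ra rb] by simp
  have e2: "\<bar>m1 * p * d - c * (m2 * r)\<bar> = 1" using H nbr_iff[OF sa sb]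
    by (simp add: farey_nbr_scaled_def mult.assoc)
  have "g1 * g2 * (m1 * p * d - c * (m2 * r)) = int n * (p * s - q * r)"
  proof -
    have "g1 * g2 * (m1 * p * d - c * (m2 * r)) = (g1 * m1) * p * (g2 * d) - (g1 * c) * (g2 * m2) * r"
      by (simp add: algebra_simps)
    also have "\<dots> = int n * (p * s - q * r)" using nn1 nn2 q1 s1 by (simp add: algebra_simps)
    finally show ?thesis .
  qed
  then have "\<bar>g1 * g2\<bar> * \<bar>m1 * p * d - c * (m2 * r)\<bar> = \<bar>int n\<bar> * \<bar>p * s - q * r\<bar>"
    by (metis abs_mult)
  then have gg: "g1 * g2 = int n" using e1 e2 g1p g2p by simp
  show "\<exists>(n1::nat) (n2::nat) (a::int) (b::int) (c::int) (d::int).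
        n = n1 * n2 \<and>
        is_reduced_rep A a (int n1 * c) \<and>
        is_reduced_rep B b (int n2 * d) \<and>
        \<bar>a * int n2 * d - b * int n1 * c\<bar> = 1"
  proof (intro exI conjI)
    show "n = nat g1 * nat g2" using gg g1p g2p by (metis nat_int nat_mult_distrib less_imp_le)
    show "is_reduced_rep A p (int (nat g1) * c)" using ra q1 g1p by simp
    show "is_reduced_rep B r (int (nat g2) * d)" using rb s1 g2p by simp
    have "p * int (nat g2) * d - r * int (nat g1) * c = p * s - q * r"
      using q1 s1 g1p g2p by (simp add: algebra_simps)
    then show "\<bar>p * int (nat g2) * d - r * int (nat g1) * c\<bar> = 1" using e1 by simp
  qed
next
  assume "\<exists>(n1::nat) (n2::nat) (a::int) (b::int) (c::int) (d::int).
        n = n1 * n2 \<and>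
        is_reduced_rep A a (int n1 * c) \<and>
        is_reduced_rep B b (int n2 * d) \<and>
        \<bar>a * int n2 * d - b * int n1 * c\<bar> = 1"
  then obtain n1 n2 a b c d where h: "n = n1 * n2" "is_reduced_rep A a (int n1 * c)"
    "is_reduced_rep B b (int n2 * d)" "\<bar>a * int n2 * d - b * int n1 * c\<bar> = 1" by blast
  have n1p: "int n1 \<noteq> 0" "int n2 \<noteq> 0" using h(1) assms by auto
  have f1: "farey_nbr A B" using nbr_iff[OF h(2) h(3)] h(4)
    by (simp add: algebra_simps)
  have cop1: "coprime (int n2) c"
  proof (rule coprimeI)
    fix k assume "k dvd int n2" "k dvd c"
    then have "k dvd a * int n2 * d - b * int n1 * c" by simp
    then have "k dvd \<bar>a * int n2 * d - b * int n1 * c\<bar>" by simp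
    then show "is_unit k" using h(4) by simp
  qed
  have cop2: "coprime (int n1) d"
  proof (rule coprimeI)
    fix k assume "k dvd int n1" "k dvd d"
    then have "k dvd a * int n2 * d - b * int n1 * c" by simp
    then have "k dvd \<bar>a * int n2 * d - b * int n1 * c\<bar>" by simp
    then show "is_unit k" using h(4) by simp
  qed
  have "coprime a c" using h(2) by (simp add: is_reduced_rep_def)
  then have c1: "coprime (int n2 * a) c" using cop1 by simp
  have "coprime b d" using h(3) by (simp add: is_reduced_rep_def)
  then have c2: "coprime (int n1 * b) d" using cop2 by simp
  have sa: "is_reduced_rep (scale_pt n A) (int n2 * a) c"
    using rep_scale[OF h(2) refl _ c1 n1p(1)] h(1) by simp
  have sb: "is_reduced_rep (scale_pt n B) (int n1 * b) d"
    using rep_scale[OF h(3) refl _ c2 n1p(2)] h(1) by (simp add: mult.commute)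
  have "farey_nbr_scaled n A B" unfolding farey_nbr_scaled_def using nbr_iff[OF sa sb] h(4)
    by (simp add: algebra_simps)
  then show "farey_nbr A B \<and> farey_nbr_scaled n A B" using f1 by simp
qed

end
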